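(* For all integers $n,m$, the multiplication map $\mathcal{L}_n\otimes\mathcal{L}_m\to\mathcal{L}_{n+m}$, $x\otimes y\mapsto xy$, induces an isomorphism of $\mathcal{A}(\mathbb{CP}^1_q)$-bimodules $\mathcal{L}_n\otimes_{\mathcal{A}(\mathbb{CP}^1_q)}\mathcal{L}_m\simeq\mathcal{L}_{n+m}$.
   Context: Fix $0<q<1$. Let $\mathcal{A}(SU_q(2))$ be the unital complex $*$-algebra generated by $a,c$ subject to $ac=qca$, $ac^*=qc^*a$, $cc^*=c^*c$, $a^*a+c^*c=aa^*+q^2cc^*=1$. Let $U_q(su(2))$ be the Hopf $*$-algebra generated by $K,K^{-1},E,F$ with $KK^{-1}=K^{-1}K=1$, $KE=qEK$, $KF=q^{-1}FK$, $EF-FE=(K^2-K^{-2})/(q-q^{-1})$, coproduct $\Delta K=K\otimes K$, $\Delta E=E\otimes K+K^{-1}\otimes E$, $\Delta F=F\otimes K+K^{-1}\otimes F$, counit $\epsilon(K)=1$, $\epsilon(E)=\epsilon(F)=0$. It acts on $\mathcal{A}(SU_q(2))$ from the left, $g\otimes x\mapsto g\triangleright x$, making $\mathcal{A}(SU_q(2))$ a left module algebra ($g\triangleright(xy)=\sum(g_{(1)}\triangleright x)(g_{(2)}\triangleright y)$, $g\triangleright1=\epsilon(g)1$), with $K\triangleright a=q^{-1/2}a$, $K\triangleright c=q^{-1/2}c$, $K\triangleright a^*=q^{1/2}a^*$, $K\triangleright c^*=q^{1/2}c^*$. For $n\in\mathbb{Z}$ let $\mathcal{L}_n=\{x\in\mathcal{A}(SU_q(2)):K\triangleright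 x=q^{n/2}x\}$; then $\mathcal{L}_n\mathcal{L}_m\subseteq\mathcal{L}_{n+m}$. The coordinate algebra of the quantum projective line is $\mathcal{A}(\mathbb{CP}^1_q):=\mathcal{L}_0$ (the $*$-subalgebra generated by $ac^*,ca^*,cc^*$), and each $\mathcal{L}_n$ is an $\mathcal{A}(\mathbb{CP}^1_q)$-bimodule under multiplication. *)

theory Defs
  imports Complex_Main
begin

datatype gen = GA | GAs | GC | GCs
  \<comment> \<open>GA = a, GAs = a*, GC = c, GCs = c*\<close>

type_synonym fw = "gen list \<Rightarrow> complex"
  \<comment> \<open>elements of the free algebra: finitely supported coefficient functions on words\<close>

definition fsupp :: "('b \<Rightarrow> complex) \<Rightarrow> 'b set" where
  "fsupp f = {w. f w \<noteq> 0}"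

definition fin :: "('b \<Rightarrow> complex) \<Rightarrow> bool" where
  "fin f \<longleftrightarrow> finite (fsupp f)"

definition vzero :: "'b \<Rightarrow> complex" where
  "vzero = (\<lambda>_. 0)"

definition vadd :: "('b \<Rightarrow> complex) \<Rightarrow> ('b \<Rightarrow> complex) \<Rightarrow> 'b \<Rightarrow> complex" where
  "vadd f g = (\<lambda>w. f w + g w)"

definition vscale :: "complex \<Rightarrow> ('b \<Rightarrow> complex) \<Rightarrow> 'b \<Rightarrow> complex" where
  "vscale c f = (\<lambda>w. c * f w)"

definition vsub :: "('b \<Rightarrow> complex) \<Rightarrow> ('b \<Rightarrow> complex) \<Rightarrow> 'b \<Rightarrow> complex" where
  "vsub f g = (\<lambda>w. f w - g w)"

definition delta :: "'b \<Rightarrow> 'b \<Rightarrow> complex" where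
  "delta x = (\<lambda>y. if y = x then 1 else 0)"

inductive_set cspan :: "('b \<Rightarrow> complex) set \<Rightarrow> ('b \<Rightarrow> complex) set" for S where
  span_zero: "vzero \<in> cspan S"
| span_gen: "v \<in> S \<Longrightarrow> v \<in> cspan S"
| span_add: "u \<in> cspan S \<Longrightarrow> v \<in> cspan S \<Longrightarrow> vadd u v \<in> cspan S"
| span_scale: "v \<in> cspan S \<Longrightarrow> vscale c v \<in> cspan S"

text \<open>Multiplication of the free algebra (concatenation of words, extended bilinearly).\<close>
definition fmul :: "fw \<Rightarrow> fw \<Rightarrow> fw" where
  "fmul f g = (\<lambda>w. \<Sum>i\<le>length w. f (take i w) * g (drop i w))"

definition fone :: fw where "fone = delta []"
definition ga :: fw where "ga = delta [GA]"
definition gas :: fw where "gas = delta [GAs]"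
definition gc :: fw where "gc = delta [GC]"
definition gcs :: fw where "gcs = delta [GCs]"

text \<open>The defining relations, together with the adjoints of the non-selfadjoint ones
  (so that the ideal generated is a *-ideal; q is real).\<close>
definition suq_rels :: "real \<Rightarrow> fw set" where
  "suq_rels q =
    { vsub (fmul ga gc) (vscale (of_real q) (fmul gc ga)),
      vsub (fmul ga gcs) (vscale (of_real q) (fmul gcs ga)),
      vsub (fmul gc gcs) (fmul gcs gc),
      vsub (vadd (fmul gas ga) (fmul gcs gc)) fone,
      vsub (vadd (fmul ga gas) (vscale (of_real (q^2)) (fmul gc gcs))) fone,
      vsub (fmul gcs gas) (vscale (of_real q) (fmul gas gcs)),
      vsub (fmul gc gas) (vscale (of_real q) (fmul gas gc)) }"

text \<open>The two-sided ideal generated by the relations; A(SU_q(2)) is the quotient of the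
  finitely supported elements of the free algebra by it.\<close>
definition suq_ideal :: "real \<Rightarrow> fw set" where
  "suq_ideal q = cspan {fmul (fmul u r) v | u r v. fin u \<and> fin v \<and> r \<in> suq_rels q}"

definition equiv_suq :: "real \<Rightarrow> fw \<Rightarrow> fw \<Rightarrow> bool" where
  "equiv_suq q x y \<longleftrightarrow> vsub x y \<in> suq_ideal q"

text \<open>K is group-like, so it acts by an algebra automorphism determined by its values on
  the generators; on the free algebra it acts on a word by the product of the generator
  eigenvalues (and this descends to the quotient).\<close>
fun Kgen :: "real \<Rightarrow> gen \<Rightarrow> real" where
  "Kgen q GA = q powr (-1/2)"
| "Kgen q GC = q powr (-1/2)"
| "Kgen q GAs = q powr (1/2)"
| "Kgen q GCs = q powr (1/2)"

definition Kact :: "real \<Rightarrow> fw \<Rightarrow> fw" where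
  "Kact q f = (\<lambda>w. of_real (\<Prod>g\<leftarrow>w. Kgen q g) * f w)"

text \<open>Representatives of elements of L_n: K acts by q^(n/2) modulo the ideal.\<close>
definition Lrep :: "real \<Rightarrow> int \<Rightarrow> fw set" where
  "Lrep q n = {x. fin x \<and> equiv_suq q (Kact q x) (vscale (of_real (q powr (real_of_int n / 2))) x)}"

section \<open>The balanced tensor product L_n \<otimes> L_m over A(CP^1_q) = L_0\<close>

definition tens_free :: "real \<Rightarrow> int \<Rightarrow> int \<Rightarrow> (fw \<times> fw \<Rightarrow> complex) set" where
  "tens_free q n m = {t. fin t \<and> fsupp t \<subseteq> Lrep q n \<times> Lrep q m}"

text \<open>Relations defining the tensor product over L_0: independence of the chosen
  representatives, bilinearity, and L_0-balancedness.\<close>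
definition tens_rels :: "real \<Rightarrow> int \<Rightarrow> int \<Rightarrow> (fw \<times> fw \<Rightarrow> complex) set" where
  "tens_rels q n m =
     {vsub (delta (x, y)) (delta (x', y)) | x x' y.
        x \<in> Lrep q n \<and> x' \<in> Lrep q n \<and> y \<in> Lrep q m \<and> equiv_suq q x x'}
   \<union> {vsub (delta (x, y)) (delta (x, y')) | x y y'.
        x \<in> Lrep q n \<and> y \<in> Lrep q m \<and> y' \<in> Lrep q m \<and> equiv_suq q y y'}
   \<union> {vsub (delta (vadd x x', y)) (vadd (delta (x, y)) (delta (x', y))) | x x' y.
        x \<in> Lrep q n \<and> x' \<in> Lrep q n \<and> y \<in> Lrep q m}
   \<union> {vsub (delta (x, vadd y y')) (vadd (delta (x, y)) (delta (x, y'))) | x y y'.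
        x \<in> Lrep q n \<and> y \<in> Lrep q m \<and> y' \<in> Lrep q m}
   \<union> {vsub (delta (vscale c x, y)) (vscale c (delta (x, y))) | c x y.
        x \<in> Lrep q n \<and> y \<in> Lrep q m}
   \<union> {vsub (delta (x, vscale c y)) (vscale c (delta (x, y))) | c x y.
        x \<in> Lrep q n \<and> y \<in> Lrep q m}
   \<union> {vsub (delta (fmul x b, y)) (delta (x, fmul b y)) | x b y.
        x \<in> Lrep q n \<and> b \<in> Lrep q 0 \<and> y \<in> Lrep q m}"

definition tens_null :: "real \<Rightarrow> int \<Rightarrow> int \<Rightarrow> (fw \<times> fw \<Rightarrow> complex) set" where
  "tens_null q n m = cspan (tens_rels q n m)"

definition tens_mult :: "(fw \<times> fw \<Rightarrow> complex) \<Rightarrow> fw" where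
  "tens_mult t = (\<lambda>w. \<Sum>p\<in>fsupp t. t p * fmul (fst p) (snd p) w)"

end

theory Submission imports Defs "HOL-Library.Function_Algebras" "HOL-Library.Nat_Bijection" begin


lemma sum_fun_apply: "(\<Sum>p\<in>S. f p) w = (\<Sum>p\<in>S. f p w)"
  by (induction S rule: infinite_finite_induct) auto

lemma vdefs: "vzero = 0" "vadd f g = f + g" "vsub f g = f - g"
  by (auto simp: vzero_def vadd_def vsub_def fun_eq_iff)

lemma vscale_apply[simp]: "vscale c f w = c * f w" by (simp add: vscale_def)

lemma vscale_add: "vscale c (f + g) = vscale c f + vscale c g"
  by (auto simp: fun_eq_iff algebra_simps)
lemma vscale_diff: "vscale c (f - g) = vscale c f - vscale c g"
  by (auto simp: fun_eq_iff algebra_simps)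
lemma vscale_zero[simp]: "vscale c 0 = 0" by (auto simp: fun_eq_iff)
lemma vscale_0[simp]: "vscale 0 f = 0" by (auto simp: fun_eq_iff)
lemma vscale_1[simp]: "vscale 1 f = f" by (auto simp: fun_eq_iff)
lemma vscale_m1: "vscale (-1) f = - f" by (auto simp: fun_eq_iff)
lemma vscale_vscale: "vscale c (vscale d f) = vscale (c*d) f" by (auto simp: fun_eq_iff)
lemma vscale_sum: "vscale c (\<Sum>p\<in>S. f p) = (\<Sum>p\<in>S. vscale c (f p))"
  by (auto simp: fun_eq_iff sum_fun_apply sum_distrib_left)

lemma cspan_0[simp]: "0 \<in> cspan S" using cspan.span_zero by (simp add: vdefs)
lemma cspan_add: "u \<in> cspan S \<Longrightarrow> v \<in> cspan S \<Longrightarrow> u + v \<in> cspan S"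
  using cspan.span_add by (metis vdefs(2))
lemma cspan_scale: "u \<in> cspan S \<Longrightarrow> vscale c u \<in> cspan S"
  using cspan.span_scale by metis
lemma cspan_neg: "u \<in> cspan S \<Longrightarrow> - u \<in> cspan S"
  using cspan_scale[of u S "-1"] by (simp add: vscale_m1)
lemma cspan_diff: "u \<in> cspan S \<Longrightarrow> v \<in> cspan S \<Longrightarrow> u - v \<in> cspan S"
  using cspan_add[OF _ cspan_neg] by (metis diff_conv_add_uminus)
lemma cspan_sum: "(\<And>p. p \<in> A \<Longrightarrow> f p \<in> cspan S) \<Longrightarrow> (\<Sum>p\<in>A. f p) \<in> cspan S"
  by (induction A rule: infinite_finite_induct) (auto intro: cspan_add)
lemma cspan_gen: "v \<in> S \<Longrightarrow> v \<in> cspan S" by (rule cspan.span_gen)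

lemma fin_0[simp]: "fin 0" by (simp add: fin_def fsupp_def)
lemma fin_add: "fin f \<Longrightarrow> fin g \<Longrightarrow> fin (f + g)"
  unfolding fin_def fsupp_def by (rule finite_subset[of _ "{w. f w \<noteq> 0} \<union> {w. g w \<noteq> 0}"]) auto
lemma fin_scale: "fin f \<Longrightarrow> fin (vscale c f)"
  unfolding fin_def fsupp_def by (rule finite_subset[of _ "{w. f w \<noteq> 0}"]) auto
lemma fin_neg: "fin f \<Longrightarrow> fin (- f)"
  using fin_scale[of f "-1"] by (simp add: vscale_m1)
lemma fin_diff: "fin f \<Longrightarrow> fin g \<Longrightarrow> fin (f - g)"
  by (metis diff_conv_add_uminus fin_add fin_neg)
lemma fin_sum: "(\<And>p. p \<in> A \<Longrightarrow> fin (f p)) \<Longrightarrow> fin (\<Sum>p\<in>A. f p)"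
  by (induction A rule: infinite_finite_induct) (auto intro: fin_add)
lemma fsupp_delta[simp]: "fsupp (delta p) = {p}" by (auto simp: fsupp_def delta_def)
lemma fin_delta[simp]: "fin (delta p)" by (simp add: fin_def)
lemma fsupp_add: "fsupp (f + g) \<subseteq> fsupp f \<union> fsupp g" by (auto simp: fsupp_def)
lemma fsupp_sum: "fsupp (\<Sum>p\<in>A. f p) \<subseteq> (\<Union>p\<in>A. fsupp (f p))"
  by (induction A rule: infinite_finite_induct) (auto simp: fsupp_def)
lemma cspan_fin: "x \<in> cspan S \<Longrightarrow> (\<And>v. v \<in> S \<Longrightarrow> fin v) \<Longrightarrow> fin x"
  by (induction x rule: cspan.induct) (auto simp: vdefs intro: fin_add fin_scale)

lemma fin_repr: "fin t \<Longrightarrow> t = (\<Sum>p\<in>fsupp t. vscale (t p) (delta p))"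
  apply (rule ext)
proof -
  fix x
  have "(\<Sum>p\<in>fsupp t. vscale (t p) (delta p)) x = (\<Sum>p\<in>fsupp t. if p = x then t p else 0)"
    by (auto simp: sum_fun_apply delta_def intro!: sum.cong)
  also assume "fin t"
  hence "(\<Sum>p\<in>fsupp t. if p = x then t p else 0) = t x"
    using sum.delta[of "fsupp t" x t] by (auto simp: fin_def fsupp_def)
  finally show "t x = (\<Sum>p\<in>fsupp t. vscale (t p) (delta p)) x" by simp
qed



definition splits :: "'a list \<Rightarrow> ('a list \<times> 'a list) set" where
  "splits w = {(u,v). u @ v = w}"

lemma splits_img: "splits w = (\<lambda>i. (take i w, drop i w)) ` {..length w}"
proof -
  have "(u, v) \<in> (\<lambda>i. (take i w, drop i w)) ` {..length w}" if "u @ v = w" for u v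
    using that by (intro image_eqI[of _ _ "length u"]) auto
  thus ?thesis unfolding splits_def by auto
qed

lemma finite_splits[simp]: "finite (splits w)" by (simp add: splits_img)

lemma fmul_splits: "fmul f g w = (\<Sum>(u,v)\<in>splits w. f u * g v)"
proof -
  have "inj_on (\<lambda>i. (take i w, drop i w)) {..length w}"
    by (auto simp: inj_on_def) (metis length_take min.absorb2)
  thus ?thesis unfolding splits_img fmul_def by (simp add: sum.reindex)
qed

lemma fmul_add_left: "fmul (f + g) h = fmul f h + fmul g h"
  by (auto simp: fun_eq_iff fmul_def algebra_simps sum.distrib)
lemma fmul_add_right: "fmul h (f + g) = fmul h f + fmul h g"
  by (auto simp: fun_eq_iff fmul_def algebra_simps sum.distrib)
lemma fmul_diff_left: "fmul (f - g) h = fmul f h - fmul g h"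
  by (auto simp: fun_eq_iff fmul_def algebra_simps sum_subtractf)
lemma fmul_diff_right: "fmul h (f - g) = fmul h f - fmul h g"
  by (auto simp: fun_eq_iff fmul_def algebra_simps sum_subtractf)
lemma fmul_zero_left[simp]: "fmul 0 h = 0"
  by (auto simp: fun_eq_iff fmul_def)
lemma fmul_zero_right[simp]: "fmul h 0 = 0"
  by (auto simp: fun_eq_iff fmul_def)
lemma fmul_scale_left: "fmul (vscale c f) h = vscale c (fmul f h)"
  by (auto simp: fun_eq_iff fmul_def algebra_simps sum_distrib_left)
lemma fmul_scale_right: "fmul h (vscale c f) = vscale c (fmul h f)"
  by (auto simp: fun_eq_iff fmul_def algebra_simps sum_distrib_left)
lemma fmul_sum_left: "fmul (\<Sum>p\<in>A. f p) h = (\<Sum>p\<in>A. fmul (f p) h)"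
proof (induction A rule: infinite_finite_induct)
  case (insert x F)
  thus ?case by (metis fmul_add_left sum.insert)
next
  case (infinite A) thus ?case by (metis fmul_zero_left sum.infinite)
qed (metis fmul_zero_left sum.empty)
lemma fmul_sum_right: "fmul h (\<Sum>p\<in>A. f p) = (\<Sum>p\<in>A. fmul h (f p))"
proof (induction A rule: infinite_finite_induct)
  case (insert x F)
  thus ?case by (metis fmul_add_right sum.insert)
next
  case (infinite A) thus ?case by (metis fmul_zero_right sum.infinite)
qed (metis fmul_zero_right sum.empty)

lemma fmul_one_left[simp]: "fmul fone f = f"
proof (rule ext)
  fix w
  have "fmul fone f w = (\<Sum>p\<in>splits w. if p = ([], w) then f w else 0)"
    unfolding fmul_splits fone_def delta_def
    by (rule sum.cong) (auto simp: splits_def split: if_splits)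
  also have "\<dots> = f w" by (subst sum.delta[OF finite_splits]) (simp add: splits_def)
  finally show "fmul fone f w = f w" .
qed

lemma fmul_one_right[simp]: "fmul f fone = f"
proof (rule ext)
  fix w
  have "fmul f fone w = (\<Sum>p\<in>splits w. if p = (w, []) then f w else 0)"
    unfolding fmul_splits fone_def delta_def
    by (rule sum.cong) (auto simp: splits_def split: if_splits)
  also have "\<dots> = f w" by (subst sum.delta[OF finite_splits]) (simp add: splits_def)
  finally show "fmul f fone w = f w" .
qed

lemma fmul_assoc: "fmul (fmul f g) h = fmul f (fmul g h)"
proof (rule ext)
  fix w
  define F where "F = (\<lambda>(a::gen list) (b::gen list) (c::gen list). f a * g b * h c)"
  have "fmul (fmul f g) h w = (\<Sum>p\<in>splits w. \<Sum>r\<in>splits (fst p). F (fst r) (snd r) (snd p))"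
    unfolding fmul_splits F_def by (auto simp: sum_distrib_right case_prod_beta intro!: sum.cong)
  also have "\<dots> = (\<Sum>z\<in>Sigma (splits w) (\<lambda>p. splits (fst p)). F (fst (snd z)) (snd (snd z)) (snd (fst z)))"
    using sum.Sigma[of "splits w" "\<lambda>p. splits (fst p)" "\<lambda>p r. F (fst r) (snd r) (snd p)"]
    by (simp add: case_prod_beta)
  also have "\<dots> = (\<Sum>z\<in>Sigma (splits w) (\<lambda>p. splits (snd p)). F (fst (fst z)) (fst (snd z)) (snd (snd z)))"
    by (rule sum.reindex_bij_witness[where i="\<lambda>((u,y),(v,x)). ((u@v,x),(u,v))"
          and j="\<lambda>((s,x),(u,v)). ((u,v@x),(v,x))"]) (auto simp: splits_def)
  also have "\<dots> = (\<Sum>p\<in>splits w. \<Sum>r\<in>splits (snd p). F (fst p) (fst r) (snd r))"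
    using sum.Sigma[of "splits w" "\<lambda>p. splits (snd p)" "\<lambda>p r. F (fst p) (fst r) (snd r)"]
    by (simp add: case_prod_beta)
  also have "\<dots> = fmul f (fmul g h) w"
    unfolding fmul_splits F_def by (auto simp: sum_distrib_left case_prod_beta mult.assoc intro!: sum.cong)
  finally show "fmul (fmul f g) h w = fmul f (fmul g h) w" .
qed

lemma fin_fmul: "fin f \<Longrightarrow> fin g \<Longrightarrow> fin (fmul f g)"
proof -
  assume f: "fin f" and g: "fin g"
  have "fsupp (fmul f g) \<subseteq> (\<lambda>(u,v). u @ v) ` (fsupp f \<times> fsupp g)"
  proof
    fix w assume "w \<in> fsupp (fmul f g)"
    hence "(\<Sum>(u,v)\<in>splits w. f u * g v) \<noteq> 0" by (simp add: fsupp_def fmul_splits)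
    then obtain u v where "(u,v) \<in> splits w" "f u * g v \<noteq> 0"
      by (metis (mono_tags, lifting) case_prod_conv sum.neutral surj_pair)
    thus "w \<in> (\<lambda>(u,v). u @ v) ` (fsupp f \<times> fsupp g)"
      by (auto simp: splits_def fsupp_def)
  qed
  thus ?thesis using f g unfolding fin_def by (auto intro: finite_subset)
qed

lemma fin_fone[simp]: "fin fone" by (simp add: fone_def)
lemma fin_gens[simp]: "fin ga" "fin gas" "fin gc" "fin gcs"
  by (simp_all add: ga_def gas_def gc_def gcs_def)



lemma Kact_add: "Kact q (f + g) = Kact q f + Kact q g"
  by (auto simp: fun_eq_iff Kact_def algebra_simps)
lemma Kact_diff: "Kact q (f - g) = Kact q f - Kact q g"
  by (auto simp: fun_eq_iff Kact_def algebra_simps)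
lemma Kact_scale: "Kact q (vscale c f) = vscale c (Kact q f)"
  by (auto simp: fun_eq_iff Kact_def algebra_simps)
lemma Kact_zero[simp]: "Kact q 0 = 0"
  by (auto simp: fun_eq_iff Kact_def)
lemma fin_Kact: "fin f \<Longrightarrow> fin (Kact q f)"
  unfolding fin_def fsupp_def Kact_def by (rule finite_subset[of _ "{w. f w \<noteq> 0}"]) auto

lemma Kact_fmul: "Kact q (fmul f g) = fmul (Kact q f) (Kact q g)"
proof (rule ext)
  fix w
  have sp: "prod_list (map (Kgen q) w) = prod_list (map (Kgen q) (take i w)) * prod_list (map (Kgen q) (drop i w))" for i
    by (metis append_take_drop_id map_append prod_list.append)
  show "Kact q (fmul f g) w = fmul (Kact q f) (Kact q g) w"
    unfolding Kact_def fmul_def sum_distrib_left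
  proof (intro sum.cong refl)
    fix i show "complex_of_real (prod_list (map (Kgen q) w)) * (f (take i w) * g (drop i w)) =
      complex_of_real (prod_list (map (Kgen q) (take i w))) * f (take i w) *
      (complex_of_real (prod_list (map (Kgen q) (drop i w))) * g (drop i w))"
      using sp[of i] by (simp add: algebra_simps)
  qed
qed

lemma Kact_one[simp]: "Kact q fone = fone"
  by (auto simp: fun_eq_iff Kact_def fone_def delta_def)

lemma Kact_gen: "Kact q (delta [g]) = vscale (of_real (Kgen q g)) (delta [g])"
  by (auto simp: fun_eq_iff Kact_def delta_def)

abbreviation "IG q \<equiv> {fmul (fmul u r) v | u r v. fin u \<and> fin v \<and> r \<in> suq_rels q}"

lemma I_0[simp]: "0 \<in> suq_ideal q" by (simp add: suq_ideal_def)
lemma I_add: "x \<in> suq_ideal q \<Longrightarrow> y \<in> suq_ideal q \<Longrightarrow> x + y \<in> suq_ideal q"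
  by (simp add: suq_ideal_def cspan_add)
lemma I_diff: "x \<in> suq_ideal q \<Longrightarrow> y \<in> suq_ideal q \<Longrightarrow> x - y \<in> suq_ideal q"
  by (simp add: suq_ideal_def cspan_diff)
lemma I_neg: "x \<in> suq_ideal q \<Longrightarrow> - x \<in> suq_ideal q"
  by (simp add: suq_ideal_def cspan_neg)
lemma I_scale: "x \<in> suq_ideal q \<Longrightarrow> vscale c x \<in> suq_ideal q"
  by (simp add: suq_ideal_def cspan_scale)
lemma I_sum: "(\<And>p. p \<in> A \<Longrightarrow> f p \<in> suq_ideal q) \<Longrightarrow> (\<Sum>p\<in>A. f p) \<in> suq_ideal q"
  by (simp add: suq_ideal_def cspan_sum)

lemma I_left: "x \<in> suq_ideal q \<Longrightarrow> fin w \<Longrightarrow> fmul w x \<in> suq_ideal q"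
  unfolding suq_ideal_def
proof (induction x rule: cspan.induct)
  case span_zero thus ?case using cspan.span_zero by (simp add: vzero_def fmul_def)
next
  case (span_gen v)
  then obtain u r v' where "v = fmul (fmul u r) v'" "fin u" "fin v'" "r \<in> suq_rels q" by blast
  hence "fmul w v = fmul (fmul (fmul w u) r) v'" "fin (fmul w u)"
    using span_gen by (simp_all add: fmul_assoc fin_fmul)
  thus ?case using \<open>fin v'\<close> \<open>r \<in> suq_rels q\<close> by (intro cspan.span_gen) blast
next
  case (span_add u v) thus ?case unfolding vdefs fmul_add_right by (intro cspan_add) simp_all
next
  case (span_scale v c) thus ?case unfolding fmul_scale_right by (intro cspan_scale) simp_all
qed

lemma I_right: "x \<in> suq_ideal q \<Longrightarrow> fin w \<Longrightarrow> fmul x w \<in> suq_ideal q"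
  unfolding suq_ideal_def
proof (induction x rule: cspan.induct)
  case span_zero thus ?case using cspan.span_zero by (simp add: vzero_def fmul_def)
next
  case (span_gen v)
  then obtain u r v' where "v = fmul (fmul u r) v'" "fin u" "fin v'" "r \<in> suq_rels q" by blast
  hence "fmul v w = fmul (fmul u r) (fmul v' w)" "fin (fmul v' w)"
    using span_gen by (simp_all add: fmul_assoc fin_fmul)
  thus ?case using \<open>fin u\<close> \<open>r \<in> suq_rels q\<close> by (intro cspan.span_gen) blast
next
  case (span_add u v) thus ?case unfolding vdefs fmul_add_left by (intro cspan_add) simp_all
next
  case (span_scale v c) thus ?case unfolding fmul_scale_left by (intro cspan_scale) simp_all
qed

lemma I_rel: "r \<in> suq_rels q \<Longrightarrow> r \<in> suq_ideal q"
proof -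
  assume "r \<in> suq_rels q"
  hence "fmul (fmul fone r) fone \<in> IG q" using fin_fone by blast
  thus ?thesis unfolding suq_ideal_def by (auto intro: cspan.span_gen)
qed

lemma I_mid: "e \<in> suq_ideal q \<Longrightarrow> fin u \<Longrightarrow> fin v \<Longrightarrow> fmul (fmul u e) v \<in> suq_ideal q"
  by (intro I_right I_left)

lemma Lrep_iff: "x \<in> Lrep q k \<longleftrightarrow> fin x \<and> Kact q x - vscale (of_real (q powr (real_of_int k / 2))) x \<in> suq_ideal q"
  by (simp add: Lrep_def equiv_suq_def vdefs)

lemma Lrep_fin: "x \<in> Lrep q k \<Longrightarrow> fin x" by (simp add: Lrep_iff)

lemma Lrep_0[simp]: "0 \<in> Lrep q k" by (simp add: Lrep_iff)

lemma Lrep_add: "x \<in> Lrep q k \<Longrightarrow> y \<in> Lrep q k \<Longrightarrow> x + y \<in> Lrep q k"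
proof -
  assume x: "x \<in> Lrep q k" and y: "y \<in> Lrep q k"
  let ?l = "of_real (q powr (real_of_int k / 2)) :: complex"
  have "Kact q (x + y) - vscale ?l (x + y) = (Kact q x - vscale ?l x) + (Kact q y - vscale ?l y)"
    by (simp add: Kact_add vscale_add)
  thus ?thesis using x y by (simp add: Lrep_iff fin_add I_add)
qed

lemma Lrep_scale: "x \<in> Lrep q k \<Longrightarrow> vscale c x \<in> Lrep q k"
proof -
  assume x: "x \<in> Lrep q k"
  let ?l = "of_real (q powr (real_of_int k / 2)) :: complex"
  have "Kact q (vscale c x) - vscale ?l (vscale c x) = vscale c (Kact q x - vscale ?l x)"
    by (simp add: Kact_scale vscale_diff vscale_vscale mult.commute)
  thus ?thesis using x by (simp add: Lrep_iff fin_scale I_scale)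
qed

lemma Lrep_sum: "(\<And>p. p \<in> A \<Longrightarrow> f p \<in> Lrep q k) \<Longrightarrow> (\<Sum>p\<in>A. f p) \<in> Lrep q k"
  by (induction A rule: infinite_finite_induct) (auto intro: Lrep_add)

lemma Lrep_mul: "x \<in> Lrep q n \<Longrightarrow> y \<in> Lrep q m \<Longrightarrow> fmul x y \<in> Lrep q (n + m)"
proof -
  assume x: "x \<in> Lrep q n" and y: "y \<in> Lrep q m"
  define l where "l = (of_real (q powr (real_of_int n / 2)) :: complex)"
  define u where "u = (of_real (q powr (real_of_int m / 2)) :: complex)"
  have lu: "of_real (q powr (real_of_int (n+m) / 2)) = l * u"
    unfolding l_def u_def by (simp add: add_divide_distrib powr_add)
  have fx: "fin x" "fin (Kact q y)" using x y by (simp_all add: Lrep_iff fin_Kact)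
  have "Kact q (fmul x y) - vscale (l * u) (fmul x y)
      = fmul (Kact q x - vscale l x) (Kact q y) + vscale l (fmul x (Kact q y - vscale u y))"
    by (simp add: Kact_fmul fmul_diff_left fmul_diff_right fmul_scale_left fmul_scale_right
        vscale_diff vscale_vscale)
  also have "\<dots> \<in> suq_ideal q"
    using x y fx by (intro I_add I_scale I_left I_right) (simp_all add: Lrep_iff l_def u_def)
  finally show ?thesis using fx y unfolding Lrep_iff lu by (simp add: Lrep_iff fin_fmul)
qed

lemma Lrep_one: "0 < q \<Longrightarrow> fone \<in> Lrep q 0" by (simp add: Lrep_iff)

lemma Lrep_gens: "gas \<in> Lrep q 1" "gcs \<in> Lrep q 1" "ga \<in> Lrep q (-1)" "gc \<in> Lrep q (-1)"
  by (simp_all add: Lrep_iff ga_def gas_def gc_def gcs_def Kact_gen)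



definition PU :: "real \<Rightarrow> int \<Rightarrow> bool" where
  "PU q n \<longleftrightarrow> (\<exists>(J::nat set) U V. finite J \<and> (\<forall>i\<in>J. U i \<in> Lrep q n \<and> V i \<in> Lrep q (-n))
      \<and> (\<Sum>i\<in>J. fmul (U i) (V i)) - fone \<in> suq_ideal q)"

lemma PU0: "0 < q \<Longrightarrow> PU q 0"
  unfolding PU_def
  by (rule exI[of _ "{0}"], rule exI[of _ "\<lambda>_. fone"], rule exI[of _ "\<lambda>_. fone"]) (simp add: Lrep_one)

lemma PU1: "PU q 1"
  unfolding PU_def
proof (rule exI[of _ "{0,1}"], rule exI[of _ "\<lambda>i. if i = 0 then gas else gcs"],
    rule exI[of _ "\<lambda>i. if i = 0 then ga else gc"], intro conjI)
  have "vsub (vadd (fmul gas ga) (fmul gcs gc)) fone \<in> suq_ideal q"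
    by (rule I_rel) (simp add: suq_rels_def)
  thus "(\<Sum>i\<in>{0::nat,1}. fmul (if i = 0 then gas else gcs) (if i = 0 then ga else gc)) - fone \<in> suq_ideal q"
    by (simp add: vdefs)
qed (auto simp: Lrep_gens)

lemma PUm1: "PU q (-1)"
  unfolding PU_def
proof (rule exI[of _ "{0,1}"], rule exI[of _ "\<lambda>i. if i = 0 then ga else vscale (of_real (q^2)) gc"],
    rule exI[of _ "\<lambda>i. if i = 0 then gas else gcs"], intro conjI)
  have "vsub (vadd (fmul ga gas) (vscale (of_real (q^2)) (fmul gc gcs))) fone \<in> suq_ideal q"
    by (rule I_rel) (simp add: suq_rels_def)
  thus "(\<Sum>i\<in>{0::nat,1}. fmul (if i = 0 then ga else vscale (of_real (q^2)) gc) (if i = 0 then gas else gcs)) - fone \<in> suq_ideal q"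
    by (simp add: vdefs fmul_scale_left)
qed (auto simp: Lrep_gens Lrep_scale)

lemma PU_mult:
  assumes "PU q n" "PU q k" shows "PU q (n + k)"
proof -
  obtain J :: "nat set" and U V where J: "finite J" "\<And>i. i\<in>J \<Longrightarrow> U i \<in> Lrep q n \<and> V i \<in> Lrep q (-n)"
    "(\<Sum>i\<in>J. fmul (U i) (V i)) - fone \<in> suq_ideal q"
    using assms(1) unfolding PU_def by blast
  obtain J2 :: "nat set" and U2 V2 where J2: "finite J2" "\<And>i. i\<in>J2 \<Longrightarrow> U2 i \<in> Lrep q k \<and> V2 i \<in> Lrep q (-k)"
    "(\<Sum>i\<in>J2. fmul (U2 i) (V2 i)) - fone \<in> suq_ideal q"
    using assms(2) unfolding PU_def by blast
  define E where "E = (\<Sum>j\<in>J2. fmul (U2 j) (V2 j))"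
  define U' where "U' x = fmul (U (fst (prod_decode x))) (U2 (snd (prod_decode x)))" for x
  define V' where "V' x = fmul (V2 (snd (prod_decode x))) (V (fst (prod_decode x)))" for x
  let ?K = "prod_encode ` (J \<times> J2)"
  have "finite ?K" using J J2 by simp
  moreover have "\<forall>x\<in>?K. U' x \<in> Lrep q (n + k) \<and> V' x \<in> Lrep q (-(n+k))"
  proof
    fix x assume "x \<in> ?K"
    then obtain i j where ij: "i \<in> J" "j \<in> J2" "x = prod_encode (i,j)" by blast
    have "V' x = fmul (V2 j) (V i)" unfolding V'_def ij(3) by simp
    moreover have "fmul (V2 j) (V i) \<in> Lrep q (-k + -n)"
      by (rule Lrep_mul) (use J(2)[OF ij(1)] J2(2)[OF ij(2)] in auto)
    moreover have "-k + -n = -(n+k)" by simp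
    moreover have "U' x = fmul (U i) (U2 j)" unfolding U'_def ij(3) by simp
    moreover have "fmul (U i) (U2 j) \<in> Lrep q (n + k)"
      by (rule Lrep_mul) (use J(2)[OF ij(1)] J2(2)[OF ij(2)] in auto)
    ultimately show "U' x \<in> Lrep q (n + k) \<and> V' x \<in> Lrep q (-(n+k))" by metis
  qed
  moreover have "(\<Sum>x\<in>?K. fmul (U' x) (V' x)) - fone \<in> suq_ideal q"
  proof -
    have "(\<Sum>x\<in>?K. fmul (U' x) (V' x)) = (\<Sum>p\<in>J \<times> J2. fmul (U' (prod_encode p)) (V' (prod_encode p)))"
      by (rule sum.reindex[OF inj_prod_encode, unfolded comp_def])
    also have "\<dots> = (\<Sum>i\<in>J. \<Sum>j\<in>J2. fmul (fmul (U i) (U2 j)) (fmul (V2 j) (V i)))"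
      unfolding U'_def V'_def by (simp add: sum.cartesian_product case_prod_beta)
    also have "\<dots> = (\<Sum>i\<in>J. fmul (fmul (U i) E) (V i))"
      unfolding E_def fmul_sum_right fmul_sum_left by (simp add: fmul_assoc)
    finally have eq: "(\<Sum>x\<in>?K. fmul (U' x) (V' x)) = (\<Sum>i\<in>J. fmul (fmul (U i) E) (V i))" .
    have "(\<Sum>i\<in>J. fmul (fmul (U i) E) (V i)) - fone
       = (\<Sum>i\<in>J. fmul (fmul (U i) (E - fone)) (V i)) + ((\<Sum>i\<in>J. fmul (U i) (V i)) - fone)"
      by (simp add: fmul_diff_right fmul_diff_left sum_subtractf)
    also have "\<dots> \<in> suq_ideal q"
      using J J2 by (intro I_add I_sum I_mid) (auto simp: E_def intro: Lrep_fin dest: J(2))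
    finally show ?thesis using eq by simp
  qed
  ultimately show ?thesis unfolding PU_def by blast
qed

lemma PU_all: assumes "0 < q" shows "PU q n"
proof (induction n rule: int_induct[where k=0])
  case base thus ?case using PU0[OF assms] .
next
  case (step1 i) thus ?case using PU_mult[OF _ PU1] by blast
next
  case (step2 i) thus ?case using PU_mult[of q i "-1"] PUm1[of q] by simp
qed



declare plus_fun_apply[simp del] zero_fun_apply[simp del] minus_apply[simp del]
  uminus_apply[simp del] vscale_apply[simp del]

lemmas papp = plus_fun_apply zero_fun_apply minus_apply uminus_apply vscale_apply

lemma vscale_add_left: "vscale (a + b) f = vscale a f + vscale b f"
  by (auto simp: fun_eq_iff papp algebra_simps)
lemma vscale_diff_left: "vscale (a - b) f = vscale a f - vscale b f"
  by (auto simp: fun_eq_iff papp algebra_simps)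

lemma TM_eq: assumes "finite S" "fsupp t \<subseteq> S"
  shows "tens_mult t = (\<Sum>p\<in>S. vscale (t p) (fmul (fst p) (snd p)))"
proof (rule ext)
  fix w
  have "tens_mult t w = (\<Sum>p\<in>fsupp t. t p * fmul (fst p) (snd p) w)" by (simp add: tens_mult_def)
  also have "\<dots> = (\<Sum>p\<in>S. t p * fmul (fst p) (snd p) w)"
    by (rule sum.mono_neutral_left) (use assms in \<open>auto simp: fsupp_def\<close>)
  also have "\<dots> = (\<Sum>p\<in>S. vscale (t p) (fmul (fst p) (snd p))) w" by (simp add: sum_fun_apply papp)
  finally show "tens_mult t w = (\<Sum>p\<in>S. vscale (t p) (fmul (fst p) (snd p))) w" .
qed

lemma TM_add: assumes "fin s" "fin t" shows "tens_mult (s + t) = tens_mult s + tens_mult t"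
proof -
  let ?S = "fsupp s \<union> fsupp t"
  have f: "finite ?S" using assms by (simp add: fin_def)
  have "tens_mult (s+t) = (\<Sum>p\<in>?S. vscale ((s+t) p) (fmul (fst p) (snd p)))"
    by (rule TM_eq[OF f]) (auto simp: fsupp_def papp)
  also have "\<dots> = (\<Sum>p\<in>?S. vscale (s p) (fmul (fst p) (snd p))) + (\<Sum>p\<in>?S. vscale (t p) (fmul (fst p) (snd p)))"
    by (simp add: papp vscale_add_left sum.distrib)
  also have "\<dots> = tens_mult s + tens_mult t"
    using TM_eq[OF f, of s] TM_eq[OF f, of t] by auto
  finally show ?thesis .
qed

lemma TM_diff: assumes "fin s" "fin t" shows "tens_mult (s - t) = tens_mult s - tens_mult t"
proof -
  let ?S = "fsupp s \<union> fsupp t"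
  have f: "finite ?S" using assms by (simp add: fin_def)
  have "tens_mult (s-t) = (\<Sum>p\<in>?S. vscale ((s-t) p) (fmul (fst p) (snd p)))"
    by (rule TM_eq[OF f]) (auto simp: fsupp_def papp)
  also have "\<dots> = (\<Sum>p\<in>?S. vscale (s p) (fmul (fst p) (snd p))) - (\<Sum>p\<in>?S. vscale (t p) (fmul (fst p) (snd p)))"
    by (simp add: papp vscale_diff_left sum_subtractf)
  also have "\<dots> = tens_mult s - tens_mult t"
    using TM_eq[OF f, of s] TM_eq[OF f, of t] by auto
  finally show ?thesis .
qed

lemma TM_scale: assumes "fin t" shows "tens_mult (vscale c t) = vscale c (tens_mult t)"
proof -
  have f: "finite (fsupp t)" using assms by (simp add: fin_def)
  have "tens_mult (vscale c t) = (\<Sum>p\<in>fsupp t. vscale (vscale c t p) (fmul (fst p) (snd p)))"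
    by (rule TM_eq[OF f]) (auto simp: fsupp_def papp)
  also have "\<dots> = vscale c (\<Sum>p\<in>fsupp t. vscale (t p) (fmul (fst p) (snd p)))"
    by (simp add: papp vscale_sum vscale_vscale)
  also have "\<dots> = vscale c (tens_mult t)"
    using TM_eq[OF f, of t] by auto
  finally show ?thesis .
qed

lemma TM_delta: "tens_mult (delta p) = fmul (fst p) (snd p)"
proof -
  have "tens_mult (delta p) = (\<Sum>p'\<in>{p}. vscale (delta p p') (fmul (fst p') (snd p')))"
    by (rule TM_eq) auto
  thus ?thesis by (simp add: delta_def)
qed

lemma TM_zero: "tens_mult 0 = 0"
  by (simp add: fun_eq_iff tens_mult_def fsupp_def papp)

lemma TM_sum: "(\<And>a. a \<in> A \<Longrightarrow> fin (f a)) \<Longrightarrow> tens_mult (\<Sum>a\<in>A. f a) = (\<Sum>a\<in>A. tens_mult (f a))"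
proof (induction A rule: infinite_finite_induct)
  case (infinite A) thus ?case by (simp add: TM_zero)
next
  case empty thus ?case by (simp add: TM_zero)
next
  case (insert x F)
  hence "tens_mult (f x + sum f F) = tens_mult (f x) + tens_mult (sum f F)"
    by (intro TM_add) (auto intro: fin_sum)
  thus ?case using insert by simp
qed

lemma part1: "t \<in> tens_free q n m \<Longrightarrow> tens_mult t \<in> Lrep q (n + m)"
proof -
  assume t: "t \<in> tens_free q n m"
  hence f: "finite (fsupp t)" and s: "fsupp t \<subseteq> Lrep q n \<times> Lrep q m"
    by (auto simp: tens_free_def fin_def)
  have "tens_mult t = (\<Sum>p\<in>fsupp t. vscale (t p) (fmul (fst p) (snd p)))"
    by (rule TM_eq[OF f]) simp
  also have "\<dots> \<in> Lrep q (n + m)"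
    using s by (intro Lrep_sum Lrep_scale Lrep_mul) auto
  finally show ?thesis .
qed

lemma Rel1: "fin y \<Longrightarrow> equiv_suq q x x' \<Longrightarrow>
  fin (delta (x,y) - delta (x',y)) \<and> tens_mult (delta (x,y) - delta (x',y)) \<in> suq_ideal q"
  by (simp add: fin_diff TM_diff TM_delta fmul_diff_left[symmetric] I_right equiv_suq_def vdefs)
lemma Rel2: "fin x \<Longrightarrow> equiv_suq q y y' \<Longrightarrow>
  fin (delta (x,y) - delta (x,y')) \<and> tens_mult (delta (x,y) - delta (x,y')) \<in> suq_ideal q"
  by (simp add: fin_diff TM_diff TM_delta fmul_diff_right[symmetric] I_left equiv_suq_def vdefs)
lemma Rel3: "fin (delta (x + x',y) - (delta (x,y) + delta (x',y))) \<and>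
   tens_mult (delta (x + x',y) - (delta (x,y) + delta (x',y))) \<in> suq_ideal q"
  by (simp add: fin_diff fin_add TM_diff TM_add TM_delta fmul_add_left)
lemma Rel4: "fin (delta (x, y + y') - (delta (x,y) + delta (x,y'))) \<and>
   tens_mult (delta (x, y + y') - (delta (x,y) + delta (x,y'))) \<in> suq_ideal q"
  by (simp add: fin_diff fin_add TM_diff TM_add TM_delta fmul_add_right)
lemma Rel5: "fin (delta (vscale c x, y) - vscale c (delta (x,y))) \<and>
   tens_mult (delta (vscale c x, y) - vscale c (delta (x,y))) \<in> suq_ideal q"
  by (simp add: fin_diff fin_scale TM_diff TM_scale TM_delta fmul_scale_left)
lemma Rel6: "fin (delta (x, vscale c y) - vscale c (delta (x,y))) \<and>
   tens_mult (delta (x, vscale c y) - vscale c (delta (x,y))) \<in> suq_ideal q"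
  by (simp add: fin_diff fin_scale TM_diff TM_scale TM_delta fmul_scale_right)
lemma Rel7: "fin (delta (fmul x b, y) - delta (x, fmul b y)) \<and>
   tens_mult (delta (fmul x b, y) - delta (x, fmul b y)) \<in> suq_ideal q"
  by (simp add: fin_diff TM_diff TM_delta fmul_assoc)

lemma TM_rels: assumes "v \<in> tens_rels q n m" shows "fin v \<and> tens_mult v \<in> suq_ideal q"
  using assms unfolding tens_rels_def vdefs
  apply (elim UnE CollectE exE conjE)
  apply (simp_all only: Rel3 Rel4 Rel5 Rel6 Rel7)
  apply (metis Rel1 Lrep_fin)
  apply (metis Rel2 Lrep_fin)
  done

lemma TM_null: "t \<in> cspan (tens_rels q n m) \<Longrightarrow> fin t \<and> tens_mult t \<in> suq_ideal q"
proof (induction t rule: cspan.induct)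
  case span_zero show ?case unfolding vdefs by (simp add: TM_zero)
next
  case (span_gen v) thus ?case by (rule TM_rels)
next
  case (span_add u v) thus ?case unfolding vdefs by (simp add: fin_add TM_add I_add)
next
  case (span_scale v c) thus ?case by (simp add: fin_scale TM_scale I_scale)
qed



lemma N_0[simp]: "0 \<in> tens_null q n m" by (simp add: tens_null_def)
lemma N_add: "x \<in> tens_null q n m \<Longrightarrow> y \<in> tens_null q n m \<Longrightarrow> x + y \<in> tens_null q n m"
  by (simp add: tens_null_def cspan_add)
lemma N_diff: "x \<in> tens_null q n m \<Longrightarrow> y \<in> tens_null q n m \<Longrightarrow> x - y \<in> tens_null q n m"
  by (simp add: tens_null_def cspan_diff)
lemma N_neg: "x \<in> tens_null q n m \<Longrightarrow> - x \<in> tens_null q n m"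
  by (simp add: tens_null_def cspan_neg)
lemma N_scale: "x \<in> tens_null q n m \<Longrightarrow> vscale c x \<in> tens_null q n m"
  by (simp add: tens_null_def cspan_scale)
lemma N_sum: "(\<And>p. p \<in> A \<Longrightarrow> f p \<in> tens_null q n m) \<Longrightarrow> (\<Sum>p\<in>A. f p) \<in> tens_null q n m"
  by (simp add: tens_null_def cspan_sum)

lemma N_R1: assumes "x \<in> Lrep q n" "x' \<in> Lrep q n" "y \<in> Lrep q m" "x - x' \<in> suq_ideal q"
  shows "delta (x,y) - delta (x',y) \<in> tens_null q n m"
proof -
  have eq: "equiv_suq q x x'" using assms(4) by (simp add: equiv_suq_def vdefs)
  have "vsub (delta (x,y)) (delta (x',y)) \<in> tens_rels q n m" unfolding tens_rels_def apply (intro UnI1) using assms eq by blast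
  thus ?thesis unfolding tens_null_def vdefs by (rule cspan_gen)
qed

lemma N_R2: assumes "x \<in> Lrep q n" "y \<in> Lrep q m" "y' \<in> Lrep q m" "y - y' \<in> suq_ideal q"
  shows "delta (x,y) - delta (x,y') \<in> tens_null q n m"
proof -
  have eq: "equiv_suq q y y'" using assms(4) by (simp add: equiv_suq_def vdefs)
  have "vsub (delta (x,y)) (delta (x,y')) \<in> tens_rels q n m" unfolding tens_rels_def apply (rule UnI1, rule UnI1, rule UnI1, rule UnI1, rule UnI1, rule UnI2) using assms eq by blast
  thus ?thesis unfolding tens_null_def vdefs by (rule cspan_gen)
qed

lemma N_R3: assumes "x \<in> Lrep q n" "x' \<in> Lrep q n" "y \<in> Lrep q m"
  shows "delta (x + x',y) - (delta (x,y) + delta (x',y)) \<in> tens_null q n m"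
proof -
  have "vsub (delta (vadd x x',y)) (vadd (delta (x,y)) (delta (x',y))) \<in> tens_rels q n m"
    unfolding tens_rels_def apply (rule UnI1, rule UnI1, rule UnI1, rule UnI1, rule UnI2) using assms by blast
  thus ?thesis unfolding tens_null_def vdefs by (rule cspan_gen)
qed

lemma N_R4: assumes "x \<in> Lrep q n" "y \<in> Lrep q m" "y' \<in> Lrep q m"
  shows "delta (x, y + y') - (delta (x,y) + delta (x,y')) \<in> tens_null q n m"
proof -
  have "vsub (delta (x, vadd y y')) (vadd (delta (x,y)) (delta (x,y'))) \<in> tens_rels q n m"
    unfolding tens_rels_def apply (rule UnI1, rule UnI1, rule UnI1, rule UnI2) using assms by blast
  thus ?thesis unfolding tens_null_def vdefs by (rule cspan_gen)
qed

lemma N_R6: assumes "x \<in> Lrep q n" "y \<in> Lrep q m"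
  shows "delta (x, vscale c y) - vscale c (delta (x,y)) \<in> tens_null q n m"
proof -
  have "vsub (delta (x, vscale c y)) (vscale c (delta (x,y))) \<in> tens_rels q n m"
    unfolding tens_rels_def apply (rule UnI1, rule UnI2) using assms by blast
  thus ?thesis unfolding tens_null_def vdefs by (rule cspan_gen)
qed

lemma N_R7: assumes "x \<in> Lrep q n" "b \<in> Lrep q 0" "y \<in> Lrep q m"
  shows "delta (fmul x b, y) - delta (x, fmul b y) \<in> tens_null q n m"
proof -
  have "vsub (delta (fmul x b, y)) (delta (x, fmul b y)) \<in> tens_rels q n m"
    unfolding tens_rels_def apply (rule UnI2) using assms by blast
  thus ?thesis unfolding tens_null_def vdefs by (rule cspan_gen)
qed

lemma N_zero1: assumes "y \<in> Lrep q m" shows "delta (0, y) \<in> tens_null q n m"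
proof -
  have "delta (0 + 0, y) - (delta (0,y) + delta (0,y)) \<in> tens_null q n m"
    using assms by (intro N_R3) auto
  hence "- delta (0, y) \<in> tens_null q n m" by simp
  from N_neg[OF this] show ?thesis by simp
qed

lemma N_zero2: assumes "x \<in> Lrep q n" shows "delta (x, 0) \<in> tens_null q n m"
proof -
  have "delta (x, 0 + 0) - (delta (x,0) + delta (x,0)) \<in> tens_null q n m"
    using assms by (intro N_R4) auto
  hence "- delta (x, 0) \<in> tens_null q n m" by simp
  from N_neg[OF this] show ?thesis by simp
qed

lemma A1: assumes "finite J" "\<And>j. j \<in> J \<Longrightarrow> f j \<in> Lrep q n" "y \<in> Lrep q m"
  shows "delta (\<Sum>j\<in>J. f j, y) - (\<Sum>j\<in>J. delta (f j, y)) \<in> tens_null q n m"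
  using assms
proof (induction J rule: finite_induct)
  case empty thus ?case using N_zero1[OF empty(2)] by simp
next
  case (insert a F)
  let ?S = "\<Sum>j\<in>F. f j"
  have SL: "?S \<in> Lrep q n" using insert by (intro Lrep_sum) auto
  have h1: "delta (f a + ?S, y) - (delta (f a, y) + delta (?S, y)) \<in> tens_null q n m"
    using insert SL by (intro N_R3) auto
  have h2: "delta (?S, y) - (\<Sum>j\<in>F. delta (f j, y)) \<in> tens_null q n m" using insert by auto
  have "delta (\<Sum>j\<in>insert a F. f j, y) - (\<Sum>j\<in>insert a F. delta (f j, y))
     = (delta (f a + ?S, y) - (delta (f a, y) + delta (?S, y))) + (delta (?S, y) - (\<Sum>j\<in>F. delta (f j, y)))"
    using insert by (simp add: algebra_simps)
  thus ?case using h1 h2 by (simp only: N_add)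
qed

lemma D3: assumes "finite S" "u \<in> Lrep q n" "\<And>p. p \<in> S \<Longrightarrow> g p \<in> Lrep q m"
  shows "(\<Sum>p\<in>S. vscale (c p) (delta (u, g p))) - delta (u, \<Sum>p\<in>S. vscale (c p) (g p)) \<in> tens_null q n m"
  using assms
proof (induction S rule: finite_induct)
  case empty thus ?case using N_zero2[OF empty(1)] N_neg by fastforce
next
  case (insert a F)
  let ?Y = "\<Sum>p\<in>F. vscale (c p) (g p)"
  let ?A = "\<Sum>p\<in>F. vscale (c p) (delta (u, g p))"
  have YL: "?Y \<in> Lrep q m" using insert by (intro Lrep_sum Lrep_scale) auto
  have gL: "vscale (c a) (g a) \<in> Lrep q m" using insert by (intro Lrep_scale) auto
  have h1: "delta (u, vscale (c a) (g a)) - vscale (c a) (delta (u, g a)) \<in> tens_null q n m"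
    using insert by (intro N_R6) auto
  have h2: "?A - delta (u, ?Y) \<in> tens_null q n m" using insert by auto
  have h3: "delta (u, vscale (c a) (g a) + ?Y) - (delta (u, vscale (c a) (g a)) + delta (u, ?Y)) \<in> tens_null q n m"
    using insert YL gL by (intro N_R4) auto
  have "(\<Sum>p\<in>insert a F. vscale (c p) (delta (u, g p))) - delta (u, \<Sum>p\<in>insert a F. vscale (c p) (g p))
     = - (delta (u, vscale (c a) (g a)) - vscale (c a) (delta (u, g a))) + (?A - delta (u, ?Y))
       - (delta (u, vscale (c a) (g a) + ?Y) - (delta (u, vscale (c a) (g a)) + delta (u, ?Y)))"
    using insert by (simp add: algebra_simps)
  thus ?case using h1 h2 h3 by (simp only: N_add N_diff N_neg)
qed



lemma D1:
  assumes J: "finite J" "\<And>i. i\<in>J \<Longrightarrow> U i \<in> Lrep q n \<and> V i \<in> Lrep q (-n)"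
    "(\<Sum>i\<in>J. fmul (U i) (V i)) - fone \<in> suq_ideal q"
  and x: "x \<in> Lrep q n" and y: "y \<in> Lrep q m"
  shows "delta (x,y) - (\<Sum>i\<in>J. delta (U i, fmul (V i) (fmul x y))) \<in> tens_null q n m"
proof -
  define E where "E = (\<Sum>i\<in>J. fmul (U i) (V i))"
  define x' where "x' = fmul E x"
  have Vx: "fmul (V i) x \<in> Lrep q 0" if "i \<in> J" for i
  proof -
    have "fmul (V i) x \<in> Lrep q (-n + n)" by (rule Lrep_mul) (use J(2)[OF that] x in auto)
    thus ?thesis by simp
  qed
  have UVx: "fmul (fmul (U i) (V i)) x \<in> Lrep q n" if "i \<in> J" for i
  proof -
    have "fmul (U i) (fmul (V i) x) \<in> Lrep q (n + 0)" by (rule Lrep_mul) (use J(2)[OF that] Vx[OF that] in auto)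
    thus ?thesis by (simp add: fmul_assoc)
  qed
  have x'eq: "x' = (\<Sum>i\<in>J. fmul (fmul (U i) (V i)) x)" by (simp add: x'_def E_def fmul_sum_left)
  have x'L: "x' \<in> Lrep q n" unfolding x'eq by (rule Lrep_sum) (rule UVx)
  have "x - x' = fmul (- (E - fone)) x"
    by (simp add: x'_def fmul_diff_left)
  also have "\<dots> \<in> suq_ideal q" using J(3) x unfolding E_def by (intro I_right I_neg) (auto intro: Lrep_fin)
  finally have s1: "delta (x,y) - delta (x',y) \<in> tens_null q n m"
    using x x'L y by (intro N_R1) auto
  have s2: "delta (x',y) - (\<Sum>i\<in>J. delta (fmul (fmul (U i) (V i)) x, y)) \<in> tens_null q n m"
    unfolding x'eq using J(1) UVx y by (rule A1)
  have s3: "(\<Sum>i\<in>J. delta (fmul (fmul (U i) (V i)) x, y) - delta (U i, fmul (V i) (fmul x y))) \<in> tens_null q n m"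
  proof (rule N_sum)
    fix i assume i: "i \<in> J"
    have "delta (fmul (U i) (fmul (V i) x), y) - delta (U i, fmul (fmul (V i) x) y) \<in> tens_null q n m"
      using J(2)[OF i] Vx[OF i] y by (intro N_R7) auto
    thus "delta (fmul (fmul (U i) (V i)) x, y) - delta (U i, fmul (V i) (fmul x y)) \<in> tens_null q n m"
      by (simp add: fmul_assoc)
  qed
  have "delta (x,y) - (\<Sum>i\<in>J. delta (U i, fmul (V i) (fmul x y)))
    = (delta (x,y) - delta (x',y)) + (delta (x',y) - (\<Sum>i\<in>J. delta (fmul (fmul (U i) (V i)) x, y)))
      + (\<Sum>i\<in>J. delta (fmul (fmul (U i) (V i)) x, y) - delta (U i, fmul (V i) (fmul x y)))"
    by (simp add: sum_subtractf)
  thus ?thesis using s1 s2 s3 by (simp only: N_add)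
qed

lemma inj_part:
  assumes q: "0 < q" and t: "t \<in> tens_free q n m" and ti: "tens_mult t \<in> suq_ideal q"
  shows "t \<in> tens_null q n m"
proof -
  obtain J :: "nat set" and U V where J: "finite J" "\<And>i. i\<in>J \<Longrightarrow> U i \<in> Lrep q n \<and> V i \<in> Lrep q (-n)"
    "(\<Sum>i\<in>J. fmul (U i) (V i)) - fone \<in> suq_ideal q"
    using PU_all[OF q, of n] unfolding PU_def by blast
  have ft: "fin t" and st: "fsupp t \<subseteq> Lrep q n \<times> Lrep q m" using t by (auto simp: tens_free_def)
  have fS: "finite (fsupp t)" using ft by (simp add: fin_def)
  define W where "W i p = fmul (V i) (fmul (fst p) (snd p))" for i p
  define Y where "Y i = fmul (V i) (tens_mult t)" for i
  have tm: "tens_mult t = (\<Sum>p\<in>fsupp t. vscale (t p) (fmul (fst p) (snd p)))"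
    by (rule TM_eq[OF fS]) simp
  have r: "(\<Sum>p\<in>fsupp t. vscale (t p) (delta p)) = t" using fin_repr[OF ft] by simp
  have e1: "t - (\<Sum>p\<in>fsupp t. vscale (t p) (\<Sum>i\<in>J. delta (U i, W i p))) \<in> tens_null q n m"
  proof -
    have "(\<Sum>p\<in>fsupp t. vscale (t p) (delta p - (\<Sum>i\<in>J. delta (U i, W i p))))
      = (\<Sum>p\<in>fsupp t. vscale (t p) (delta p)) - (\<Sum>p\<in>fsupp t. vscale (t p) (\<Sum>i\<in>J. delta (U i, W i p)))"
      by (simp add: vscale_diff sum_subtractf)
    moreover have "(\<Sum>p\<in>fsupp t. vscale (t p) (delta p - (\<Sum>i\<in>J. delta (U i, W i p)))) \<in> tens_null q n m"
    proof (intro N_sum N_scale)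
      fix p assume p: "p \<in> fsupp t"
      hence "fst p \<in> Lrep q n" "snd p \<in> Lrep q m" using st by auto
      from D1[OF J this] show "delta p - (\<Sum>i\<in>J. delta (U i, W i p)) \<in> tens_null q n m"
        by (simp add: W_def)
    qed
    ultimately show ?thesis using r by simp
  qed
  have e2: "(\<Sum>p\<in>fsupp t. vscale (t p) (\<Sum>i\<in>J. delta (U i, W i p)))
      = (\<Sum>i\<in>J. \<Sum>p\<in>fsupp t. vscale (t p) (delta (U i, W i p)))"
    by (simp add: vscale_sum sum.swap[of _ J])
  have tL: "tens_mult t \<in> Lrep q (n + m)" using t by (rule part1)
  have e3: "(\<Sum>p\<in>fsupp t. vscale (t p) (delta (U i, W i p))) - delta (U i, Y i) \<in> tens_null q n m"
    if i: "i \<in> J" for i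
  proof -
    have "(\<Sum>p\<in>fsupp t. vscale (t p) (W i p)) = Y i"
      unfolding Y_def W_def tm by (simp add: fmul_sum_right fmul_scale_right)
    moreover have "(\<Sum>p\<in>fsupp t. vscale (t p) (delta (U i, W i p))) - delta (U i, \<Sum>p\<in>fsupp t. vscale (t p) (W i p)) \<in> tens_null q n m"
    proof (rule D3[OF fS])
      show "U i \<in> Lrep q n" using J(2)[OF i] by simp
      fix p assume "p \<in> fsupp t"
      hence "fmul (fst p) (snd p) \<in> Lrep q (n + m)" using st by (intro Lrep_mul) auto
      hence "W i p \<in> Lrep q (-n + (n + m))" unfolding W_def using J(2)[OF i] Lrep_mul by blast
      thus "W i p \<in> Lrep q m" by simp
    qed
    ultimately show ?thesis by simp
  qed
  have e4: "delta (U i, Y i) \<in> tens_null q n m" if i: "i \<in> J" for i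
  proof -
    have YL: "Y i \<in> Lrep q m"
    proof -
      have "Y i \<in> Lrep q (-n + (n + m))" unfolding Y_def using J(2)[OF i] tL by (intro Lrep_mul) auto
      thus ?thesis by simp
    qed
    have YI: "Y i \<in> suq_ideal q" unfolding Y_def using ti J(2)[OF i] by (intro I_left) (auto intro: Lrep_fin)
    have "delta (U i, Y i) - delta (U i, 0) \<in> tens_null q n m"
      using J(2)[OF i] YL YI by (intro N_R2) auto
    moreover have "delta (U i, 0) \<in> tens_null q n m" using J(2)[OF i] by (intro N_zero2) auto
    ultimately have "(delta (U i, Y i) - delta (U i, 0)) + delta (U i, 0) \<in> tens_null q n m" by (rule N_add)
    thus ?thesis by simp
  qed
  have "t = (t - (\<Sum>p\<in>fsupp t. vscale (t p) (\<Sum>i\<in>J. delta (U i, W i p))))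
     + (\<Sum>i\<in>J. (\<Sum>p\<in>fsupp t. vscale (t p) (delta (U i, W i p))) - delta (U i, Y i))
     + (\<Sum>i\<in>J. delta (U i, Y i))"
    unfolding e2 by (simp add: sum_subtractf)
  also have "\<dots> \<in> tens_null q n m"
    using e1 e3 e4 by (intro N_add N_sum) auto
  finally show ?thesis .
qed

lemma surj_part:
  assumes q: "0 < q" and z: "z \<in> Lrep q (n + m)"
  shows "\<exists>t\<in>tens_free q n m. equiv_suq q (tens_mult t) z"
proof -
  obtain J :: "nat set" and U V where J: "finite J" "\<And>i. i\<in>J \<Longrightarrow> U i \<in> Lrep q n \<and> V i \<in> Lrep q (-n)"
    "(\<Sum>i\<in>J. fmul (U i) (V i)) - fone \<in> suq_ideal q"
    using PU_all[OF q, of n] unfolding PU_def by blast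
  define t where "t = (\<Sum>i\<in>J. delta (U i, fmul (V i) z))"
  have VzL: "fmul (V i) z \<in> Lrep q m" if i: "i \<in> J" for i
  proof -
    have "fmul (V i) z \<in> Lrep q (-n + (n + m))" using J(2)[OF i] z by (intro Lrep_mul) auto
    thus ?thesis by simp
  qed
  have "fin t" unfolding t_def by (intro fin_sum) simp
  moreover have "fsupp t \<subseteq> Lrep q n \<times> Lrep q m"
  proof -
    have "fsupp t \<subseteq> (\<Union>i\<in>J. fsupp (delta (U i, fmul (V i) z)))" unfolding t_def by (rule fsupp_sum)
    also have "\<dots> \<subseteq> Lrep q n \<times> Lrep q m" using J(2) VzL by auto
    finally show ?thesis .
  qed
  ultimately have tf: "t \<in> tens_free q n m" by (simp add: tens_free_def)
  have "tens_mult t = (\<Sum>i\<in>J. fmul (U i) (fmul (V i) z))"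
    unfolding t_def by (subst TM_sum) (simp_all add: TM_delta)
  also have "\<dots> = fmul (\<Sum>i\<in>J. fmul (U i) (V i)) z" by (simp add: fmul_sum_left fmul_assoc)
  finally have "vsub (tens_mult t) z = fmul ((\<Sum>i\<in>J. fmul (U i) (V i)) - fone) z"
    by (simp add: vdefs fmul_diff_left)
  also have "\<dots> \<in> suq_ideal q" using J(3) z by (intro I_right) (auto intro: Lrep_fin)
  finally show ?thesis using tf unfolding equiv_suq_def by blast
qed

theorem proposition3p1:
  fixes q :: real and n m :: int
  assumes "0 < q" and "q < 1"
  shows "(\<forall>t\<in>tens_free q n m. tens_mult t \<in> Lrep q (n + m))
       \<and> (\<forall>t\<in>tens_free q n m. tens_mult t \<in> suq_ideal q \<longleftrightarrow> t \<in> tens_null q n m)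
       \<and> (\<forall>z\<in>Lrep q (n + m). \<exists>t\<in>tens_free q n m. equiv_suq q (tens_mult t) z)"
  using part1 inj_part[OF assms(1)] TM_null surj_part[OF assms(1)]
  unfolding tens_null_def by blast

end
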